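(* Let $\mathscr{A}$ be a finite alphabet and let $\Xi\subseteq\mathscr{A}^{\mathbb{Z}}$ be a subshift containing a non-periodic element. Then for every $k\in\mathbb{N}$ the GAP-graph $\mathscr{G}_k(\Xi)$ has at least one branching vertex.
   Context: $\mathscr{A}^{\mathbb{Z}}$ has the product topology and shift $(T\xi)(j)=\xi(j-1)$; a subshift is a non-empty closed $T$-invariant subset; $\xi$ is periodic if $T^n\xi=\xi$ for some $n\geq1$. $\mathcal{D}(\Xi)$ is the set of finite subwords of elements of $\Xi$. The GAP-graph $\mathscr{G}_k(\Xi)$ has vertex set $\mathcal{D}(\Xi)\cap\mathscr{A}^k$, edge set $\mathcal{D}(\Xi)\cap\mathscr{A}^{k+1}$, the edge $a_0\cdots a_k$ going from $a_0\cdots a_{k-1}$ to $a_1\cdots a_k$. A vertex $u$ is branching if more than one edge starts at $u$ or more than one edge ends at $u$. *)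

theory Defs
  imports "HOL-Analysis.Analysis"
begin

definition shift_top :: "(int \<Rightarrow> 'a) topology" where
  "shift_top = product_topology (\<lambda>_::int. discrete_topology (UNIV::'a set)) UNIV"

definition shiftT :: "(int \<Rightarrow> 'a) \<Rightarrow> (int \<Rightarrow> 'a)" where
  "shiftT \<xi> = (\<lambda>j. \<xi> (j - 1))"

definition subshift :: "(int \<Rightarrow> 'a) set \<Rightarrow> bool" where
  "subshift X \<longleftrightarrow> X \<noteq> {} \<and> closedin shift_top X \<and> shiftT ` X = X"

definition periodic :: "(int \<Rightarrow> 'a) \<Rightarrow> bool" where
  "periodic \<xi> \<longleftrightarrow> (\<exists>n::nat. n \<ge> 1 \<and> (shiftT ^^ n) \<xi> = \<xi>)"

definition subword :: "(int \<Rightarrow> 'a) \<Rightarrow> int \<Rightarrow> nat \<Rightarrow> 'a list" where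
  "subword \<xi> j n = map (\<lambda>i. \<xi> (j + int i)) [0..<n]"

definition dict :: "(int \<Rightarrow> 'a) set \<Rightarrow> 'a list set" where
  "dict X = {w. \<exists>\<xi>\<in>X. \<exists>j. w = subword \<xi> j (length w)}"

definition gap_vertices :: "(int \<Rightarrow> 'a) set \<Rightarrow> nat \<Rightarrow> 'a list set" where
  "gap_vertices X k = {w \<in> dict X. length w = k}"

definition gap_edges :: "(int \<Rightarrow> 'a) set \<Rightarrow> nat \<Rightarrow> 'a list set" where
  "gap_edges X k = {w \<in> dict X. length w = Suc k}"

definition edge_source :: "nat \<Rightarrow> 'a list \<Rightarrow> 'a list" where
  "edge_source k e = take k e"

definition edge_target :: "'a list \<Rightarrow> 'a list" where
  "edge_target e = drop 1 e"

definition branching :: "(int \<Rightarrow> 'a) set \<Rightarrow> nat \<Rightarrow> 'a list \<Rightarrow> bool" where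
  "branching X k u \<longleftrightarrow> u \<in> gap_vertices X k \<and>
     (card {e \<in> gap_edges X k. edge_source k e = u} > 1 \<or>
      card {e \<in> gap_edges X k. edge_target e = u} > 1)"

end

theory Submission
  imports Defs
begin

lemma len_subword[simp]: "length (subword \<xi> j n) = n"
  by (simp add: subword_def)

lemma subword_dict: "\<xi> \<in> X \<Longrightarrow> subword \<xi> j n \<in> dict X"
  unfolding dict_def by auto

lemma take_subword: "m \<le> n \<Longrightarrow> take m (subword \<xi> j n) = subword \<xi> j m"
  unfolding subword_def by (simp add: take_map)

lemma drop_subword: "drop 1 (subword \<xi> j (Suc n)) = subword \<xi> (j+1) n"
  unfolding subword_def by (simp add: drop_map map_upt_Suc algebra_simps del: upt_Suc)

lemma iter_shift: "(shiftT ^^ n) \<xi> = (\<lambda>j. \<xi> (j - int n))"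
  by (induction n) (auto simp: shiftT_def algebra_simps)

lemma card_le1_eq: "finite S \<Longrightarrow> \<not> card S > 1 \<Longrightarrow> a \<in> S \<Longrightarrow> b \<in> S \<Longrightarrow> a = b"
  by (metis card_le_Suc0_iff_eq not_less One_nat_def)

theorem corollary6:
  fixes X :: "(int \<Rightarrow> 'a::finite) set"
  assumes "subshift X"
    and "\<exists>\<xi>\<in>X. \<not> periodic \<xi>"
  shows "\<forall>k::nat. \<exists>u. branching X k u"
proof (rule allI, rule ccontr)
  fix k :: nat
  assume nb: "\<not> (\<exists>u. branching X k u)"
  obtain \<xi> where xi: "\<xi> \<in> X" "\<not> periodic \<xi>" using assms(2) by blast
  define e where "e j = subword \<xi> j (Suc k)" for j
  have fin: "finite (gap_edges X k)"
  proof -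
    have "gap_edges X k \<subseteq> {w. length w = Suc k}" unfolding gap_edges_def by auto
    moreover have "finite {w::'a list. length w = Suc k}"
      using finite_lists_length_eq[of "UNIV::'a set"] by simp
    ultimately show ?thesis by (rule finite_subset)
  qed
  have eE: "e j \<in> gap_edges X k" for j
    unfolding gap_edges_def e_def using subword_dict[OF xi(1)] by auto
  have vert: "subword \<xi> j k \<in> gap_vertices X k" for j
    unfolding gap_vertices_def using subword_dict[OF xi(1)] by auto
  have src: "edge_source k (e j) = subword \<xi> j k" for j
    unfolding edge_source_def e_def by (simp add: take_subword)
  have tgt: "edge_target (e j) = subword \<xi> (j+1) k" for j
    unfolding edge_target_def e_def using drop_subword by simp
  have fwd: "e (i+1) = e (j+1)" if "e i = e j" for i j
  proof -
    let ?u = "subword \<xi> (i+1) k"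
    have "\<not> card {x \<in> gap_edges X k. edge_source k x = ?u} > 1"
      using nb vert unfolding branching_def by blast
    moreover have "subword \<xi> (j+1) k = ?u" using tgt[of i] tgt[of j] that by simp
    ultimately show ?thesis
      by (intro card_le1_eq[of "{x \<in> gap_edges X k. edge_source k x = ?u}"])
         (use fin eE src in auto)
  qed
  have bwd: "e (i-1) = e (j-1)" if "e i = e j" for i j
  proof -
    let ?u = "subword \<xi> i k"
    have "\<not> card {x \<in> gap_edges X k. edge_target x = ?u} > 1"
      using nb vert unfolding branching_def by blast
    moreover have "subword \<xi> j k = ?u" using src[of i] src[of j] that by simp
    moreover have "edge_target (e (i-1)) = ?u" "edge_target (e (j-1)) = subword \<xi> j k"
      using tgt[of "i-1"] tgt[of "j-1"] by simp_all
    ultimately show ?thesis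
      by (intro card_le1_eq[of "{x \<in> gap_edges X k. edge_target x = ?u}"])
         (use fin eE in auto)
  qed
  have "\<not> inj (\<lambda>n::nat. e (int n))"
  proof
    assume "inj (\<lambda>n::nat. e (int n))"
    moreover have "finite (range (\<lambda>n::nat. e (int n)))"
      using fin eE by (auto intro: finite_subset)
    ultimately have "finite (UNIV::nat set)" using finite_imageD by blast
    then show False by simp
  qed
  then obtain a b :: nat where ab: "a < b" "e (int a) = e (int b)"
    unfolding inj_def by (metis linorder_neqE_nat)
  have per: "e (int a + m) = e (int b + m)" for m
  proof (induction m rule: int_induct[where k=0])
    case base then show ?case using ab by simp
  next
    case (step1 i) then show ?case using fwd[of "int a + i" "int b + i"] by (simp add: add.assoc)
  next
    case (step2 i)
    have q: "int a + (i - 1) = int a + i - 1" "int b + (i - 1) = int b + i - 1" by simp_all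
    have "e (int a + i - 1) = e (int b + i - 1)" using bwd[of "int a + i" "int b + i"] step2 by blast
    then show ?case by (simp only: q)
  qed
  have hd: "hd (e j) = \<xi> j" for j
    unfolding e_def subword_def by (simp del: upt_Suc add: upt_conv_Cons)
  define p where "p = b - a"
  have pp: "p \<ge> 1" "int b = int a + int p" using ab unfolding p_def by auto
  have xp: "\<xi> (i + int p) = \<xi> i" for i
  proof -
    have q: "int a + (i - int a) = i" "int b + (i - int a) = i + int p" using pp by simp_all
    have "e i = e (i + int p)" using per[of "i - int a"] by (simp only: q)
    then show ?thesis using hd[of i] hd[of "i + int p"] by simp
  qed
  have "(shiftT ^^ p) \<xi> = \<xi>"
  proof (rule ext)
    fix j
    show "(shiftT ^^ p) \<xi> j = \<xi> j" unfolding iter_shift using xp[of "j - int p"] by simp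
  qed
  then show False using xi(2) pp unfolding periodic_def by blast
qed

end
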